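(* Let $k$ be a field, $H=\langle a_1,\dots,a_\ell\rangle$ a numerical semigroup with $\gcd(a_1,\dots,a_\ell)=1$, $R=k[[H]]\subseteq k[[t]]$ with maximal ideal $\mathfrak m$, $f=\mathrm f(H)$ the Frobenius number, $\mathrm{PF}(H)=\{c_1<c_2<\dots<c_r\}$ the pseudo-Frobenius numbers (so $c_r=f$ and $r=\mathrm r(R)$), $K=\sum_{i=1}^rRt^{f-c_i}$ and $\mathfrak c=R:R[K]$. Suppose that $R$ is a $2$-AGL ring. Then the following are equivalent: (1) $K/R\cong(R/\mathfrak c)^{\oplus(r-1)}$ as an $R$-module; (2) there is an integer $1\le j\le\ell$ such that $f+a_j=c_i+c_{r-i}$ for every $1\le i\le r-1$.
   Context: $\mathrm f(H)=\max(\mathbb Z\setminus H)$; $\mathrm{PF}(H)=\{n\in\mathbb Z\setminus H: n+a_i\in H\ \forall i\}$. $K$ is a canonical fractional ideal of $R$. $R$ is $2$-AGL if it has a canonical ideal $I$ (proper ideal $\cong\mathrm K_R$) containing a parameter ideal as a reduction with $\mathrm e_1(I)=\mathrm e_0(I)-\ell_R(R/I)+2$; equivalently $\ell_R(R[K]/K)=2$. *)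

theory Defs
  imports "HOL-Computational_Algebra.Formal_Power_Series"
begin

definition semigroup_gen :: "(nat \<Rightarrow> nat) \<Rightarrow> nat \<Rightarrow> nat set" where
  "semigroup_gen a l = {n. \<exists>x::nat \<Rightarrow> nat. n = (\<Sum>i\<in>{1..l}. x i * a i)}"

definition frobenius :: "nat set \<Rightarrow> int" where
  "frobenius H = (GREATEST z::int. z \<notin> int ` H)"

definition pseudo_frobenius :: "nat set \<Rightarrow> (nat \<Rightarrow> nat) \<Rightarrow> nat \<Rightarrow> int set" where
  "pseudo_frobenius H a l = {z::int. z \<notin> int ` H \<and> (\<forall>i\<in>{1..l}. z + int (a i) \<in> int ` H)}"

definition semigroup_ring :: "nat set \<Rightarrow> 'a::field fps set" where
  "semigroup_ring H = {p. \<forall>n. fps_nth p n \<noteq> 0 \<longrightarrow> n \<in> H}"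

definition monomial_module :: "'a::field fps set \<Rightarrow> (nat \<Rightarrow> nat) \<Rightarrow> nat \<Rightarrow> 'a fps set" where
  "monomial_module R e r = {(\<Sum>i\<in>{1..r}. g i * fps_X ^ e i) | g. \<forall>i\<in>{1..r}. g i \<in> R}"

definition ring_adjoin :: "'b::comm_ring_1 set \<Rightarrow> 'b set \<Rightarrow> 'b set" where
  "ring_adjoin R K = \<Inter>{S. R \<union> K \<subseteq> S \<and> (\<forall>x\<in>S. \<forall>y\<in>S. x + y \<in> S \<and> x * y \<in> S \<and> - x \<in> S)}"

definition colon :: "'b::comm_ring_1 set \<Rightarrow> 'b set \<Rightarrow> 'b set" where
  "colon R M = {x. \<forall>y\<in>M. x * y \<in> R}"

definition is_submod :: "'b::comm_ring_1 set \<Rightarrow> 'b set \<Rightarrow> bool" where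
  "is_submod R L \<longleftrightarrow> 0 \<in> L \<and> (\<forall>x\<in>L. \<forall>y\<in>L. x + y \<in> L) \<and> (\<forall>c\<in>R. \<forall>x\<in>L. c * x \<in> L)"

definition length_ge :: "'b::comm_ring_1 set \<Rightarrow> 'b set \<Rightarrow> 'b set \<Rightarrow> nat \<Rightarrow> bool" where
  "length_ge R N M n \<longleftrightarrow> (\<exists>L :: nat \<Rightarrow> 'b set. L 0 = N \<and> L n = M \<and>
      (\<forall>i\<le>n. is_submod R (L i)) \<and> (\<forall>i<n. L i \<subset> L (Suc i)))"

definition module_length_eq :: "'b::comm_ring_1 set \<Rightarrow> 'b set \<Rightarrow> 'b set \<Rightarrow> nat \<Rightarrow> bool" where
  "module_length_eq R N M n \<longleftrightarrow> length_ge R N M n \<and> \<not> length_ge R N M (Suc n)"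

text \<open>M/N is isomorphic to (R/I)^n as R-modules: there is an R-linear bijection
  M/N -> (R/I)^n, given here through a choice of representatives phi x i in R.\<close>
definition quot_iso_free :: "'b::comm_ring_1 set \<Rightarrow> 'b set \<Rightarrow> 'b set \<Rightarrow> 'b set \<Rightarrow> nat \<Rightarrow> bool" where
  "quot_iso_free R M N I n \<longleftrightarrow> (\<exists>\<phi> :: 'b \<Rightarrow> nat \<Rightarrow> 'b.
      (\<forall>x\<in>M. \<forall>i<n. \<phi> x i \<in> R) \<and>
      (\<forall>x\<in>M. \<forall>y\<in>M. \<forall>i<n. \<phi> (x + y) i - \<phi> x i - \<phi> y i \<in> I) \<and>
      (\<forall>c\<in>R. \<forall>x\<in>M. \<forall>i<n. \<phi> (c * x) i - c * \<phi> x i \<in> I) \<and>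
      (\<forall>x\<in>M. (\<forall>i<n. \<phi> x i \<in> I) \<longleftrightarrow> x \<in> N) \<and>
      (\<forall>y. (\<forall>i<n. y i \<in> R) \<longrightarrow> (\<exists>x\<in>M. \<forall>i<n. \<phi> x i - y i \<in> I)))"

end

theory Submission
  imports Defs
begin

lemma sgI: "n = (\<Sum>i\<in>{1..l}. x i * a i) \<Longrightarrow> n \<in> semigroup_gen a l"
  unfolding semigroup_gen_def by blast

lemma sg_0: "0 \<in> semigroup_gen a l"
  unfolding semigroup_gen_def by (rule CollectI, rule exI[of _ "\<lambda>_. 0"]) simp

lemma sg_add: assumes "x \<in> semigroup_gen a l" "y \<in> semigroup_gen a l"
  shows "x + y \<in> semigroup_gen a l"
proof -
  obtain u v where u: "x = (\<Sum>i\<in>{1..l}. u i * a i)" and v: "y = (\<Sum>i\<in>{1..l}. v i * a i)"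
    using assms unfolding semigroup_gen_def by blast
  have "x + y = (\<Sum>i\<in>{1..l}. (u i + v i) * a i)"
    by (simp add: u v sum.distrib distrib_right)
  then show ?thesis by (rule sgI)
qed

lemma sg_gen: assumes "i \<in> {1..l}" shows "a i \<in> semigroup_gen a l"
proof -
  have "(\<Sum>k\<in>{1..l}. (if k = i then 1 else 0) * a k) = (\<Sum>k\<in>{1..l}. if k = i then a k else 0)"
    by (rule sum.cong) auto
  also have "\<dots> = a i" using assms by (simp add: sum.delta)
  finally show ?thesis by (intro sgI) (rule sym)
qed

lemma sg_mult: assumes "x \<in> semigroup_gen a l" shows "m * x \<in> semigroup_gen a l"
  by (induction m) (auto simp: sg_0 sg_add assms)

lemma sg_dec: assumes "h \<in> semigroup_gen a l" "h \<noteq> 0"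
  shows "\<exists>j\<in>{1..l}. a j \<le> h \<and> h - a j \<in> semigroup_gen a l"
proof -
  obtain u where u: "h = (\<Sum>i\<in>{1..l}. u i * a i)" using assms unfolding semigroup_gen_def by blast
  then obtain j where j: "j \<in> {1..l}" "u j * a j \<noteq> 0" using assms(2)
    by (metis (no_types, lifting) sum.neutral)
  define v where "v = u(j := u j - 1)"
  have fin: "finite {1..l}" by simp
  have h1: "h = u j * a j + (\<Sum>i\<in>{1..l} - {j}. u i * a i)"
    unfolding u by (rule sum.remove[OF fin j(1)])
  have s2: "(\<Sum>i\<in>{1..l}. v i * a i) = v j * a j + (\<Sum>i\<in>{1..l} - {j}. v i * a i)"
    by (rule sum.remove[OF fin j(1)])
  have s3: "(\<Sum>i\<in>{1..l} - {j}. v i * a i) = (\<Sum>i\<in>{1..l} - {j}. u i * a i)"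
    by (rule sum.cong) (auto simp: v_def)
  obtain m where uj: "u j = Suc m" using j(2) by (cases "u j") auto
  have "u j * a j = a j + v j * a j" using uj by (simp add: v_def)
  then have "h - a j = (\<Sum>i\<in>{1..l}. v i * a i)" using h1 s2 s3 by simp
  moreover have "a j \<le> h" using h1 \<open>u j * a j = a j + v j * a j\<close> by simp
  ultimately show ?thesis using j(1) sgI by blast
qed

lemma gcd_comb: "\<exists>u::nat \<Rightarrow> int. int (Gcd (a ` {1..l})) = (\<Sum>i\<in>{1..l}. u i * int (a i))"
proof (induction l)
  case 0
  then show ?case by simp
next
  case (Suc l)
  then obtain u where u: "int (Gcd (a ` {1..l})) = (\<Sum>i\<in>{1..l}. u i * int (a i))" by blast
  obtain p q where pq: "p * int (a (Suc l)) + q * int (Gcd (a ` {1..l})) = gcd (int (a (Suc l))) (int (Gcd (a ` {1..l})))"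
    using bezout_int by blast
  have e: "{1..Suc l} = insert (Suc l) {1..l}" by auto
  define w where "w = (\<lambda>i. if i = Suc l then p else q * u i)"
  have nin: "Suc l \<notin> {1..l}" by simp
  have s1: "(\<Sum>i\<in>{1..Suc l}. w i * int (a i)) = w (Suc l) * int (a (Suc l)) + (\<Sum>i\<in>{1..l}. w i * int (a i))"
    unfolding e by (rule sum.insert[OF _ nin]) simp
  have s2: "(\<Sum>i\<in>{1..l}. w i * int (a i)) = q * (\<Sum>i\<in>{1..l}. u i * int (a i))"
    by (simp add: w_def sum_distrib_left mult.assoc)
  have g: "Gcd (a ` {1..Suc l}) = gcd (a (Suc l)) (Gcd (a ` {1..l}))"
    by (simp only: e image_insert Gcd_insert)
  have "(\<Sum>i\<in>{1..Suc l}. w i * int (a i)) = int (Gcd (a ` {1..Suc l}))"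
    unfolding s1 s2 g gcd_int_int_eq[symmetric] pq[symmetric] u[symmetric] by (simp add: w_def)
  then show ?case by metis
qed

lemma sg_cofinite: assumes "Gcd (a ` {1..l}) = 1"
  shows "\<exists>N. \<forall>n\<ge>N. n \<in> semigroup_gen a l"
proof -
  obtain u where u: "1 = (\<Sum>i\<in>{1..l}. u i * int (a i))" using gcd_comb[of a l] assms by auto
  define p where "p = (\<Sum>i\<in>{1..l}. nat (u i) * a i)"
  define q where "q = (\<Sum>i\<in>{1..l}. nat (- u i) * a i)"
  have pH: "p \<in> semigroup_gen a l" unfolding p_def by (rule sgI) (rule refl)
  have qH: "q \<in> semigroup_gen a l" unfolding q_def by (rule sgI) (rule refl)
  have "int p - int q = (\<Sum>i\<in>{1..l}. (int (nat (u i)) - int (nat (- u i))) * int (a i))"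
    by (simp add: p_def q_def sum_subtractf left_diff_distrib)
  also have "\<dots> = (\<Sum>i\<in>{1..l}. u i * int (a i))"
    by (rule sum.cong) auto
  finally have pq: "p = q + 1" using u by simp
  show ?thesis
  proof (cases "q = 0")
    case True
    then have "p = 1" using pq by simp
    then show ?thesis using sg_mult[OF pH] by (metis mult.right_neutral)
  next
    case False
    show ?thesis
    proof (intro exI allI impI)
      fix n assume n: "q * q \<le> n"
      define Q where "Q = n div q"
      define \<rho> where "\<rho> = n mod q"
      have r1: "\<rho> < q" using False by (simp add: \<rho>_def)
      have Q1: "Q \<ge> q" using n False unfolding Q_def
        by (metis div_le_mono nonzero_mult_div_cancel_right)
      have "n = Q * q + \<rho>" by (simp add: Q_def \<rho>_def)
      also have "\<dots> = (Q - \<rho>) * q + \<rho> * p"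
      proof -
        obtain t where t: "Q = t + \<rho>" using r1 Q1 by (metis le_add_diff_inverse2 less_imp_le order.trans)
        have "(t + \<rho>) * q + \<rho> = t * q + \<rho> * (q + 1)" by (simp add: algebra_simps)
        then show ?thesis using t pq by simp
      qed
      finally show "n \<in> semigroup_gen a l"
        using sg_add[OF sg_mult[OF qH] sg_mult[OF pH]] by simp
    qed
  qed
qed


unbundle fps_syntax

definition mon :: "nat set \<Rightarrow> 'a::comm_ring_1 fps set" where
  "mon A = {p. \<forall>n. p $ n \<noteq> 0 \<longrightarrow> n \<in> A}"

lemma mon_iff: "p \<in> mon A \<longleftrightarrow> (\<forall>n. p $ n \<noteq> 0 \<longrightarrow> n \<in> A)"
  by (simp add: mon_def)

lemma mon_0[simp]: "0 \<in> mon A" by (simp add: mon_def)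

lemma mon_add: "p \<in> mon A \<Longrightarrow> q \<in> mon A \<Longrightarrow> p + q \<in> mon A"
  by (auto simp: mon_def) (metis add.right_neutral)

lemma mon_neg: "p \<in> mon A \<Longrightarrow> - p \<in> mon A"
  by (auto simp: mon_def)

lemma mon_diff: "p \<in> mon A \<Longrightarrow> q \<in> mon A \<Longrightarrow> p - q \<in> mon A"
  by (auto simp: mon_def) (metis diff_zero)

lemma mon_mono: "A \<subseteq> B \<Longrightarrow> mon A \<subseteq> mon B"
  by (auto simp: mon_def)

lemma mon_X: "n \<in> A \<Longrightarrow> fps_X ^ n \<in> mon A"
  by (auto simp: mon_def)

lemma mon_const: "0 \<in> A \<Longrightarrow> fps_const x \<in> mon A"
  by (auto simp: mon_def)

lemma mon_mult:
  assumes "p \<in> mon A" "q \<in> mon B" "\<And>x y. x \<in> A \<Longrightarrow> y \<in> B \<Longrightarrow> x + y \<in> C"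
  shows "p * q \<in> mon C"
  unfolding mon_iff
proof (intro allI impI)
  fix n assume "(p * q) $ n \<noteq> 0"
  then have "(\<Sum>i=0..n. p$i * q$(n - i)) \<noteq> 0" by (simp add: fps_mult_nth)
  then obtain i where i: "i \<in> {0..n}" "p$i * q$(n - i) \<noteq> 0" by (meson sum.neutral)
  then have "p$i \<noteq> 0" "q$(n-i) \<noteq> 0" by auto
  then have "i \<in> A" "n - i \<in> B" using assms(1,2) by (auto simp: mon_def)
  then have "i + (n - i) \<in> C" by (rule assms(3))
  then show "n \<in> C" using i(1) by simp
qed

lemma mon_sum: "finite S \<Longrightarrow> (\<And>i. i \<in> S \<Longrightarrow> g i \<in> mon A) \<Longrightarrow> sum g S \<in> mon A"
  by (induction S rule: finite_induct) (auto intro: mon_add)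

lemma mon_strict: "A \<subseteq> B \<Longrightarrow> b \<in> B \<Longrightarrow> b \<notin> A \<Longrightarrow> (mon A :: 'a::comm_ring_1 fps set) \<subset> mon B"
proof -
  assume *: "A \<subseteq> B" "b \<in> B" "b \<notin> A"
  have "(fps_X ^ b :: 'a fps) \<in> mon B" using *(2) by (rule mon_X)
  moreover have "(fps_X ^ b :: 'a fps) \<notin> mon A" using *(3) by (auto simp: mon_def)
  ultimately show ?thesis using mon_mono[OF *(1)] by blast
qed

lemma submod_mon:
  assumes "\<And>h x. h \<in> B \<Longrightarrow> x \<in> A \<Longrightarrow> h + x \<in> A"
  shows "is_submod (mon B) (mon A :: 'a::comm_ring_1 fps set)"
  unfolding is_submod_def using mon_mult[where C = A] assms by (auto intro: mon_add)

lemma X_pow_mult_nth: "(p * fps_X ^ k) $ n = (if n < k then 0 else p $ (n - k))"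
  by (rule fps_X_power_mult_right_nth)

inductive_set addcl :: "nat set \<Rightarrow> nat set" for E where
  base: "x \<in> E \<Longrightarrow> x \<in> addcl E"
| plus: "x \<in> addcl E \<Longrightarrow> y \<in> addcl E \<Longrightarrow> x + y \<in> addcl E"


unbundle fps_syntax

locale ctx =
  fixes a :: "nat \<Rightarrow> nat" and l :: nat and H :: "nat set"
    and R K RK cc :: "'a::field fps set"
    and f :: int and c :: "nat \<Rightarrow> int" and r :: nat
  assumes gens_pos: "\<forall>i\<in>{1..l}. a i > 0"
    and gcd1: "Gcd (a ` {1..l}) = 1"
    and H_def: "H = semigroup_gen a l"
    and R_def: "R = semigroup_ring H"
    and f_def: "f = frobenius H"
    and c_mono: "strict_mono_on {1..r} c"
    and c_PF: "c ` {1..r} = pseudo_frobenius H a l"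
    and K_def: "K = monomial_module R (\<lambda>i. nat (f - c i)) r"
    and RK_def: "RK = ring_adjoin R K"
    and cc_def: "cc = colon R RK"
    and twoAGL: "module_length_eq R K RK 2"
begin

lemma H0: "0 \<in> H" using sg_0 H_def by simp
lemma Hadd: "x \<in> H \<Longrightarrow> y \<in> H \<Longrightarrow> x + y \<in> H" using sg_add H_def by simp
lemma Hgen: "i \<in> {1..l} \<Longrightarrow> a i \<in> H" using sg_gen H_def by simp
lemma Hdec: "h \<in> H \<Longrightarrow> h \<noteq> 0 \<Longrightarrow> \<exists>j\<in>{1..l}. a j \<le> h \<and> h - a j \<in> H"
  using sg_dec H_def by simp

lemma R_mon: "R = mon H"
  by (simp add: R_def semigroup_ring_def mon_def)

lemma frob: "f \<notin> int ` H" "\<And>z. z \<notin> int ` H \<Longrightarrow> z \<le> f"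
proof -
  obtain N where N: "\<forall>n\<ge>N. n \<in> H" using sg_cofinite[OF gcd1] H_def by auto
  define P where "P = (\<lambda>z::int. z \<notin> int ` H)"
  define M where "M = {z \<in> {-1..int N}. P z}"
  have fin: "finite M" unfolding M_def by (rule finite_subset[of _ "{-1..int N}"]) auto
  have m1: "-1 \<in> M" by (auto simp: M_def P_def)
  define f0 where "f0 = Max M"
  have "f0 \<in> M" using Max_in[OF fin] m1 unfolding f0_def by blast
  then have Pf0: "P f0" by (simp add: M_def)
  have ub: "z \<le> f0" if "P z" for z
  proof (cases "z < -1")
    case True then show ?thesis using Max_ge[OF fin m1] f0_def by simp
  next
    case False
    have "z < int N"
    proof (rule ccontr)
      assume "\<not> z < int N"
      then have "nat z \<ge> N" "z = int (nat z)" by auto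
      then have "z \<in> int ` H" using N by (metis image_eqI)
      then show False using that P_def by simp
    qed
    then have "z \<in> M" using False that by (auto simp: M_def)
    then show ?thesis using Max_ge[OF fin] f0_def by simp
  qed
  have "f = f0" unfolding f_def frobenius_def
    by (rule Greatest_equality) (use Pf0 ub P_def in auto)
  then show "f \<notin> int ` H" "\<And>z. z \<notin> int ` H \<Longrightarrow> z \<le> f" using Pf0 ub P_def by auto
qed

lemma gt_f: "z > f \<Longrightarrow> z \<in> int ` H" using frob(2) by force

lemma f_ge: "f \<ge> -1"
proof -
  have "(-1::int) \<notin> int ` H" by auto
  then show ?thesis using frob(2) by blast
qed

abbreviation "PF \<equiv> pseudo_frobenius H a l"

lemma PF_plus: assumes "z \<in> PF" "h \<in> H" "h \<noteq> 0" shows "z + int h \<in> int ` H"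
proof -
  obtain j where j: "j \<in> {1..l}" "a j \<le> h" "h - a j \<in> H" using Hdec assms(2,3) by blast
  have "z + int (a j) \<in> int ` H" using assms(1) j(1) by (auto simp: pseudo_frobenius_def)
  then obtain m where m: "m \<in> H" "z + int (a j) = int m" by blast
  have "z + int h = int (m + (h - a j))" using m j(2) by simp
  then show ?thesis using Hadd[OF m(1) j(3)] by blast
qed

lemma f_PF: "f \<in> PF"
  using frob(1) gt_f gens_pos by (auto simp: pseudo_frobenius_def)

lemma PF_le: "z \<in> PF \<Longrightarrow> z \<le> f" using frob(2) by (auto simp: pseudo_frobenius_def)

lemma PF_nonneg: assumes "z \<in> PF" "z \<noteq> f" shows "0 \<le> z"
proof (rule ccontr)
  assume neg: "\<not> 0 \<le> z"
  define h where "h = nat (f - z)"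
  have hz: "int h = f - z" using PF_le[OF assms(1)] by (simp add: h_def)
  have "h \<noteq> 0" using hz assms(2) by auto
  have "int h > f" using hz neg by simp
  then obtain m where "m \<in> H" "int h = int m" using gt_f by blast
  then have "h \<in> H" by simp
  then have "z + int h \<in> int ` H" using PF_plus assms(1) \<open>h \<noteq> 0\<close> by blast
  then show False using hz frob(1) by simp
qed

lemma r_pos: "r \<ge> 1"
proof (rule ccontr)
  assume "\<not> r \<ge> 1"
  then have "{1..r} = {}" by auto
  then show False using c_PF f_PF by auto
qed

lemma c_mono_le: "i \<in> {1..r} \<Longrightarrow> j \<in> {1..r} \<Longrightarrow> i \<le> j \<Longrightarrow> c i \<le> c j"
  using c_mono by (metis le_less strict_mono_onD)

lemma c_less_iff: "i \<in> {1..r} \<Longrightarrow> j \<in> {1..r} \<Longrightarrow> c i < c j \<longleftrightarrow> i < j"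
  using c_mono c_mono_le by (metis not_le strict_mono_onD)

lemma c_inj: "i \<in> {1..r} \<Longrightarrow> j \<in> {1..r} \<Longrightarrow> c i = c j \<Longrightarrow> i = j"
  using c_less_iff by (metis less_irrefl nat_neq_iff)

lemma c_PF_mem: "i \<in> {1..r} \<Longrightarrow> c i \<in> PF" using c_PF by blast

lemma c_r: "c r = f"
proof -
  obtain k where k: "k \<in> {1..r}" "c k = f" using f_PF c_PF by (metis imageE)
  have "c k \<le> c r" using c_mono_le[OF k(1)] k(1) r_pos by auto
  moreover have "c r \<le> f" using PF_le c_PF_mem r_pos by auto
  ultimately show ?thesis using k by simp
qed

lemma c_le_f: "i \<in> {1..r} \<Longrightarrow> c i \<le> f" using PF_le c_PF_mem by blast

lemma c_lt_f: "i \<in> {1..r} \<Longrightarrow> i < r \<Longrightarrow> c i < f"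
  using c_less_iff[of i r] c_r r_pos by auto

lemma c_nonneg: "i \<in> {1..r} \<Longrightarrow> i < r \<Longrightarrow> 0 \<le> c i"
  using PF_nonneg c_PF_mem c_lt_f by (metis less_irrefl)

end

unbundle fps_syntax

context ctx begin

definition e :: "nat \<Rightarrow> nat" where "e k = nat (f - c k)"
definition E :: "nat set" where "E = {n. \<exists>k\<in>{1..r}. \<exists>h\<in>H. n = e k + h}"

lemma R_closed: "p \<in> R \<Longrightarrow> q \<in> R \<Longrightarrow> p * q \<in> R" "p \<in> R \<Longrightarrow> q \<in> R \<Longrightarrow> p + q \<in> R"
  "p \<in> R \<Longrightarrow> - p \<in> R" "p \<in> R \<Longrightarrow> q \<in> R \<Longrightarrow> p - q \<in> R" "fps_const x \<in> R" "0 \<in> R"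
  unfolding R_mon by (auto intro: mon_mult Hadd mon_add mon_neg mon_diff mon_const H0)

lemma R_X: "n \<in> H \<Longrightarrow> fps_X ^ n \<in> R" unfolding R_mon by (rule mon_X)

lemma K_sub: "K \<subseteq> mon E"
proof
  fix x assume "x \<in> K"
  then obtain g where g: "x = (\<Sum>i\<in>{1..r}. g i * fps_X ^ e i)" "\<forall>i\<in>{1..r}. g i \<in> R"
    unfolding K_def monomial_module_def e_def by blast
  have "g i * fps_X ^ e i \<in> mon E" if "i \<in> {1..r}" for i
  proof (rule mon_mult[where A = H and B = "{e i}"])
    show "g i \<in> mon H" using g(2) that R_mon by auto
    show "fps_X ^ e i \<in> mon {e i}" by (rule mon_X) simp
    show "x + y \<in> E" if "x \<in> H" "y \<in> {e i}" for x y
      using that \<open>i \<in> {1..r}\<close> unfolding E_def by (auto simp: add.commute)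
  qed
  then show "x \<in> mon E" unfolding g(1) by (intro mon_sum) auto
qed

lemma K_sup: "mon E \<subseteq> K"
proof
  fix p :: "'a fps" assume p: "p \<in> mon E"
  define P where "P = (\<lambda>n k. k \<in> {1..r} \<and> e k \<le> n \<and> n - e k \<in> H)"
  define idx where "idx = (\<lambda>n. LEAST k. P n k)"
  have idxP: "P n (idx n)" if nE: "n \<in> E" for n
  proof -
    obtain k h where "k \<in> {1..r}" "h \<in> H" "n = e k + h" using nE unfolding E_def by blast
    then have "P n k" by (simp add: P_def)
    then show ?thesis unfolding idx_def by (rule LeastI)
  qed
  define g where "g = (\<lambda>k. Abs_fps (\<lambda>m. if idx (m + e k) = k then p $ (m + e k) else 0))"
  have gR: "g k \<in> R" if "k \<in> {1..r}" for k
    unfolding R_mon mon_iff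
  proof (intro allI impI)
    fix m assume "g k $ m \<noteq> 0"
    then have "idx (m + e k) = k" "p $ (m + e k) \<noteq> 0" by (auto simp: g_def split: if_splits)
    then have "m + e k \<in> E" "idx (m + e k) = k" using p by (auto simp: mon_def)
    then show "m \<in> H" using idxP[of "m + e k"] by (simp add: P_def)
  qed
  have "p = (\<Sum>k\<in>{1..r}. g k * fps_X ^ e k)"
  proof (rule fps_ext)
    fix n
    have "(\<Sum>k\<in>{1..r}. g k * fps_X ^ e k) $ n = (\<Sum>k\<in>{1..r}. if n < e k then 0 else g k $ (n - e k))"
      by (simp add: fps_sum_nth fps_X_power_mult_right_nth)
    also have "\<dots> = (\<Sum>k\<in>{1..r}. if e k \<le> n \<and> idx n = k then p $ n else 0)"
      by (rule sum.cong) (auto simp: g_def)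
    also have "\<dots> = p $ n"
    proof (cases "p $ n = 0")
      case True then show ?thesis by (simp add: sum.neutral)
    next
      case False
      then have "n \<in> E" using p by (auto simp: mon_def)
      then have Pn: "P n (idx n)" by (rule idxP)
      have "(\<Sum>k\<in>{1..r}. if e k \<le> n \<and> idx n = k then p $ n else 0) = (\<Sum>k\<in>{1..r}. if k = idx n then p $ n else 0)"
        by (rule sum.cong) (use Pn P_def in auto)
      also have "\<dots> = p $ n" using Pn by (simp add: P_def)
      finally show ?thesis .
    qed
    finally show "p $ n = (\<Sum>k\<in>{1..r}. g k * fps_X ^ e k) $ n" by simp
  qed
  then show "p \<in> K" unfolding K_def monomial_module_def e_def[symmetric] using gR by blast
qed

lemma K_mon: "K = mon E" using K_sub K_sup by blast

lemma RK_sup_R: "R \<subseteq> RK" "K \<subseteq> RK"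
  unfolding RK_def ring_adjoin_def by auto

lemma r2: "r \<ge> 2"
proof (rule ccontr)
  assume "\<not> r \<ge> 2"
  then have r1: "r = 1" using r_pos by simp
  have "e 1 = 0" using c_r r1 by (simp add: e_def)
  then have "E = H" unfolding E_def using r1 by auto
  then have KR: "K = R" using K_mon R_mon by simp
  have "RK \<subseteq> R" unfolding RK_def ring_adjoin_def KR
    by (rule Inter_lower) (auto intro: R_closed)
  then have RKR: "RK = R" using RK_sup_R by blast
  obtain L where L: "L 0 = K" "L 2 = RK" "\<forall>i<2. L i \<subset> L (Suc i)"
    using twoAGL unfolding module_length_eq_def length_ge_def by blast
  have "L 0 \<subset> L 1" "L 1 \<subset> L 2" using L(3) by (auto simp: numeral_2_eq_2)
  then show False using L(1,2) KR RKR by auto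
qed

end

unbundle fps_syntax

context ctx begin

definition F :: nat where "F = nat f"
definition Cn :: "nat \<Rightarrow> nat" where "Cn k = nat (c k)"

lemma f_pos: "f \<ge> 1"
proof -
  have "1 \<in> {1..r}" "1 < r" using r2 by auto
  then show ?thesis using c_lt_f c_nonneg by fastforce
qed

lemma c_range: "k \<in> {1..r} \<Longrightarrow> 0 \<le> c k \<and> c k \<le> f"
  using c_nonneg c_le_f c_r f_pos by (cases "k < r") auto

lemma int_F: "int F = f" using f_pos by (simp add: F_def)
lemma int_Cn: "k \<in> {1..r} \<Longrightarrow> int (Cn k) = c k" using c_range by (simp add: Cn_def)
lemma Cn_le: "k \<in> {1..r} \<Longrightarrow> Cn k \<le> F" using c_range int_Cn int_F by fastforce
lemma e_eq: assumes "k \<in> {1..r}" shows "e k = F - Cn k"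
proof -
  have "int (F - Cn k) = f - c k" using Cn_le[OF assms] int_Cn[OF assms] int_F by (simp add: of_nat_diff)
  then show ?thesis by (simp add: e_def)
qed
lemma Cn_r: "Cn r = F" using c_r by (simp add: Cn_def F_def)
lemma e_r: "e r = 0" using c_r by (simp add: e_def)
lemma Cn_lt: "k \<in> {1..r} \<Longrightarrow> k < r \<Longrightarrow> Cn k < F"
  using c_lt_f int_Cn int_F by fastforce
lemma Cn_inj: "i \<in> {1..r} \<Longrightarrow> j \<in> {1..r} \<Longrightarrow> Cn i = Cn j \<Longrightarrow> i = j"
  using int_Cn c_inj by metis
lemma Cn_less_iff: "i \<in> {1..r} \<Longrightarrow> j \<in> {1..r} \<Longrightarrow> Cn i < Cn j \<longleftrightarrow> i < j"
  using int_Cn c_less_iff by (metis of_nat_less_iff)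

lemma N1: "F \<notin> H" "n > F \<Longrightarrow> n \<in> H"
proof -
  show "F \<notin> H"
  proof
    assume "F \<in> H"
    then have "f \<in> int ` H" using int_F by (metis image_eqI)
    then show False using frob(1) by simp
  qed
  show "n \<in> H" if "n > F"
  proof -
    have "int n > f" using that int_F by simp
    then have "int n \<in> int ` H" using gt_f by blast
    then show ?thesis by (metis image_iff of_nat_eq_iff)
  qed
qed

lemma N2: "k \<in> {1..r} \<Longrightarrow> Cn k \<notin> H"
  "k \<in> {1..r} \<Longrightarrow> h \<in> H \<Longrightarrow> h \<noteq> 0 \<Longrightarrow> Cn k + h \<in> H"
proof -
  assume k: "k \<in> {1..r}"
  have PF: "int (Cn k) \<in> PF" using c_PF_mem[OF k] int_Cn[OF k] by simp
  then show "Cn k \<notin> H" by (auto simp: pseudo_frobenius_def)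
  assume "h \<in> H" "h \<noteq> 0"
  then have "int (Cn k) + int h \<in> int ` H" using PF_plus PF by blast
  then obtain m where "m \<in> H" "int (Cn k) + int h = int m" by blast
  then show "Cn k + h \<in> H" by (metis of_nat_add of_nat_eq_iff)
qed

lemma N3: "g \<notin> H \<Longrightarrow> \<exists>k\<in>{1..r}. \<exists>h\<in>H. g + h = Cn k"
proof (induction "F - g" arbitrary: g rule: less_induct)
  case less
  have gF: "g \<le> F" using less.prems N1(2) by (meson not_le)
  show ?case
  proof (cases "\<forall>i\<in>{1..l}. g + a i \<in> H")
    case True
    have "int g + int (a i) \<in> int ` H" if "i \<in> {1..l}" for i
      using True that by (metis image_eqI of_nat_add)
    moreover have "int g \<notin> int ` H" using less.prems by auto
    ultimately have "int g \<in> PF" by (simp add: pseudo_frobenius_def)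
    then obtain k where k: "k \<in> {1..r}" "c k = int g" using c_PF by (metis imageE)
    then have "g + 0 = Cn k" by (simp add: Cn_def)
    then show ?thesis using k(1) H0 by blast
  next
    case False
    then obtain i where i: "i \<in> {1..l}" "g + a i \<notin> H" by blast
    have "g + a i \<le> F" using i(2) N1(2) by (meson not_le)
    moreover have "a i > 0" using gens_pos i(1) by blast
    ultimately have "F - (g + a i) < F - g" by simp
    then obtain k h where "k \<in> {1..r}" "h \<in> H" "g + a i + h = Cn k" using less.hyps i(2) by blast
    then show ?thesis using Hadd[OF Hgen[OF i(1)]] by (metis add.assoc)
  qed
qed

lemma E2: "n \<in> E \<longleftrightarrow> (n \<le> F \<longrightarrow> F - n \<notin> H)"
proof
  assume "n \<in> E"
  then obtain k h where kh: "k \<in> {1..r}" "h \<in> H" "n = e k + h" unfolding E_def by blast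
  show "n \<le> F \<longrightarrow> F - n \<notin> H"
  proof (intro impI notI)
    assume "n \<le> F" "F - n \<in> H"
    have "Cn k = (F - n) + h" using kh \<open>n \<le> F\<close> e_eq[OF kh(1)] Cn_le[OF kh(1)] by simp
    then have "Cn k \<in> H" using Hadd[OF \<open>F - n \<in> H\<close> kh(2)] by simp
    then show False using N2(1)[OF kh(1)] by simp
  qed
next
  assume *: "n \<le> F \<longrightarrow> F - n \<notin> H"
  show "n \<in> E"
  proof (cases "n \<le> F")
    case False
    then have "n \<in> H" using N1(2) by simp
    then have "n = e r + n" "r \<in> {1..r}" using e_r r_pos by auto
    then show ?thesis unfolding E_def using \<open>n \<in> H\<close> by blast
  next
    case True
    then obtain k h where kh: "k \<in> {1..r}" "h \<in> H" "F - n + h = Cn k" using N3 * by blast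
    then have "n = e k + h" using e_eq[OF kh(1)] Cn_le[OF kh(1)] True by simp
    then show ?thesis unfolding E_def using kh by blast
  qed
qed

lemma H_sub_E: "H \<subseteq> E"
proof
  fix n assume "n \<in> H"
  then have "n = e r + n" "r \<in> {1..r}" using e_r r_pos by auto
  then show "n \<in> E" unfolding E_def using \<open>n \<in> H\<close> by blast
qed

lemma E_add: assumes "n \<in> E" "h \<in> H" shows "n + h \<in> E"
proof -
  obtain k h' where "k \<in> {1..r}" "h' \<in> H" "n = e k + h'" using assms(1) unfolding E_def by blast
  then have "n + h = e k + (h' + h)" "h' + h \<in> H" using Hadd assms(2) by auto
  then show ?thesis unfolding E_def using \<open>k \<in> {1..r}\<close> by blast
qed

lemma e_E: "k \<in> {1..r} \<Longrightarrow> e k \<in> E" unfolding E_def using H0 by force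

lemma E3: assumes "k \<in> {1..r}" "k < r"
  shows "e k \<notin> H" "e k \<noteq> 0" "Cn k \<in> E"
proof -
  have ek: "e k = F - Cn k" "Cn k < F" using e_eq assms Cn_lt by auto
  show "e k \<noteq> 0" using ek by simp
  show "e k \<notin> H"
  proof
    assume "e k \<in> H"
    then have "Cn k + e k \<in> H" using N2(2)[OF assms(1)] \<open>e k \<noteq> 0\<close> by blast
    then show False using ek N1(1) by simp
  qed
  show "Cn k \<in> E" unfolding E2 using \<open>e k \<notin> H\<close> ek by simp
qed

lemma E4: assumes "k \<in> {1..r}" "h \<in> H" "h \<noteq> 0" "h \<le> e k" shows "e k - h \<notin> E"
proof
  assume "e k - h \<in> E"
  moreover have "e k - h \<le> F" "F - (e k - h) = Cn k + h"
    using e_eq[OF assms(1)] Cn_le[OF assms(1)] assms(4) by auto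
  ultimately show False using E2 N2(2)[OF assms(1-3)] by simp
qed

abbreviation "S \<equiv> addcl E"

lemma E_sub_S: "E \<subseteq> S" by (auto intro: addcl.base)
lemma H_sub_S: "H \<subseteq> S" using H_sub_E E_sub_S by blast
lemma S_add: "x \<in> S \<Longrightarrow> y \<in> S \<Longrightarrow> x + y \<in> S" by (rule addcl.plus)

definition Dset :: "nat set" where "Dset = S - E"

lemma D_le: assumes "d \<in> Dset" shows "d \<le> F"
proof (rule ccontr)
  assume "\<not> d \<le> F"
  then have "d \<in> E" using N1(2) H_sub_E by auto
  then show False using assms by (simp add: Dset_def)
qed

lemma D_fin: "finite Dset"
proof (rule finite_subset)
  show "Dset \<subseteq> {..F}" using D_le by auto
qed simp

lemma F_D: "F \<in> Dset"
proof -
  have k: "1 \<in> {1..r}" "1 < r" using r2 by auto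
  have "e 1 + Cn 1 = F" using e_eq[OF k(1)] Cn_le[OF k(1)] by simp
  moreover have "e 1 \<in> S" "Cn 1 \<in> S" using e_E[OF k(1)] E3(3)[OF k] E_sub_S by auto
  ultimately have "F \<in> S" using S_add by metis
  moreover have "F \<notin> E" unfolding E2 using H0 by simp
  ultimately show ?thesis by (simp add: Dset_def)
qed

lemma X_S_RK: assumes T: "R \<union> K \<subseteq> T" "\<forall>x\<in>T. \<forall>y\<in>T. x + y \<in> T \<and> x * y \<in> T \<and> - x \<in> T"
  shows "\<sigma> \<in> S \<Longrightarrow> fps_X ^ \<sigma> \<in> T"
proof (induction rule: addcl.induct)
  case (base x)
  then show ?case using K_mon T(1) mon_X[of x E] by blast
next
  case (plus x y)
  then show ?case using T(2) by (simp add: power_add)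
qed

lemma RK_mon: "RK = mon S"
proof
  show "RK \<subseteq> mon S" unfolding RK_def ring_adjoin_def
  proof (rule Inter_lower, safe)
    show "x \<in> mon S" if "x \<in> R" for x using that R_mon mon_mono H_sub_S by blast
    show "x \<in> mon S" if "x \<in> K" for x using that K_mon mon_mono E_sub_S by blast
    fix x y :: "'a fps" assume xy: "x \<in> mon S" "y \<in> mon S"
    show "x + y \<in> mon S" using xy by (rule mon_add)
    show "- x \<in> mon S" using xy(1) by (rule mon_neg)
    show "x * y \<in> mon S" using xy by (rule mon_mult) (rule S_add)
  qed
  show "mon S \<subseteq> RK" unfolding RK_def ring_adjoin_def
  proof (rule Inter_greatest, safe)
    fix T and p :: "'a fps"
    assume T1: "R \<union> K \<subseteq> T" and T2: "\<forall>x\<in>T. \<forall>y\<in>T. x + y \<in> T \<and> x * y \<in> T \<and> - x \<in> T"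
      and p: "p \<in> mon S"
    define pE where "pE = Abs_fps (\<lambda>n. if n \<in> E then p $ n else 0)"
    have "pE \<in> mon E" by (auto simp: mon_def pE_def)
    then have pET: "pE \<in> T" using K_mon T1 by blast
    have Xd: "fps_X ^ d \<in> T" if "d \<in> Dset" for d
      using X_S_RK[OF T1 T2] that by (simp add: Dset_def)
    have gen: "(\<Sum>d\<in>A. fps_const (p $ d) * fps_X ^ d) \<in> T" if "finite A" "A \<subseteq> Dset" for A
      using that
    proof (induction A rule: finite_induct)
      case empty
      then show ?case using T1 R_closed(6) by auto
    next
      case (insert x A)
      have "fps_const (p $ x) \<in> T" using T1 R_closed(5) by blast
      moreover have "fps_X ^ x \<in> T" using Xd insert(4) by blast
      ultimately show ?case using insert T2 by simp
    qed
    have sumT: "(\<Sum>d\<in>Dset. fps_const (p $ d) * fps_X ^ d) \<in> T" using gen D_fin by blast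
    have "p = pE + (\<Sum>d\<in>Dset. fps_const (p $ d) * fps_X ^ d)"
    proof (rule fps_ext)
      fix n
      have "(\<Sum>d\<in>Dset. fps_const (p $ d) * fps_X ^ d) $ n = (\<Sum>d\<in>Dset. if d = n then p $ n else 0)"
        unfolding fps_sum_nth by (rule sum.cong) auto
      also have "\<dots> = (if n \<in> Dset then p $ n else 0)" using D_fin by (simp add: sum.delta)
      finally show "p $ n = (pE + (\<Sum>d\<in>Dset. fps_const (p $ d) * fps_X ^ d)) $ n"
        using p by (auto simp: pE_def Dset_def mon_def)
    qed
    then show "p \<in> T" using pET sumT T2 by metis
  qed
qed

end

unbundle fps_syntax

context ctx begin

lemma K_RK_sub: "K \<subseteq> RK" using RK_sup_R by blast

lemma D_ge2: "card Dset \<ge> 2"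
proof (rule ccontr)
  assume "\<not> card Dset \<ge> 2"
  then have "card Dset \<le> 1" by simp
  then have "\<forall>x\<in>Dset. \<forall>y\<in>Dset. x = y" using D_fin card_le_Suc0_iff_eq by (metis One_nat_def)
  then have DF: "Dset = {F}" using F_D by blast
  obtain L where L: "L 0 = K" "L 2 = RK" "\<forall>i\<le>2. is_submod R (L i)" "\<forall>i<2. L i \<subset> L (Suc i)"
    using twoAGL unfolding module_length_eq_def length_ge_def by blast
  have L01: "K \<subset> L 1" "L 1 \<subset> RK" using L(1,2,4) by (auto simp: numeral_2_eq_2)
  have sm: "is_submod R (L 1)" using L(3) by auto
  obtain p where p: "p \<in> L 1" "p \<notin> K" using L01 by blast
  obtain q where q: "q \<in> RK" "q \<notin> L 1" using L01 by blast
  have pS: "p \<in> mon S" using p L01 RK_mon by blast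
  have qS: "q \<in> mon S" using q RK_mon by blast
  have monE: "x \<in> K" if "x \<in> mon S" "x $ F = 0" for x
  proof -
    have "x \<in> mon E" unfolding mon_iff
    proof (intro allI impI)
      fix n assume "x $ n \<noteq> 0"
      then have "n \<in> S" "n \<noteq> F" using that by (auto simp: mon_def)
      then show "n \<in> E" using DF by (auto simp: Dset_def)
    qed
    then show ?thesis using K_mon by simp
  qed
  have pF: "p $ F \<noteq> 0" using monE pS p(2) by blast
  define q' where "q' = q - fps_const (q $ F / p $ F) * p"
  have "q' \<in> mon S" unfolding q'_def
    by (intro mon_diff qS mon_mult[OF mon_const pS]) (auto intro: addcl.base H0 H_sub_E[THEN subsetD] simp: )
  moreover have "q' $ F = 0" using pF by (simp add: q'_def)
  ultimately have "q' \<in> L 1" using monE L01 by blast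
  moreover have "fps_const (q $ F / p $ F) * p \<in> L 1" using sm p(1) R_closed(5) by (simp add: is_submod_def)
  ultimately have "q' + fps_const (q $ F / p $ F) * p \<in> L 1" using sm by (simp add: is_submod_def)
  then show False using q(2) by (simp add: q'_def)
qed

lemma D_le2: "card Dset \<le> 2"
proof (rule ccontr)
  assume "\<not> card Dset \<le> 2"
  then have c3: "card Dset \<ge> 3" by simp
  define w where "w = Max Dset"
  define v where "v = Max (Dset - {w})"
  define u where "u = Max (Dset - {w, v})"
  have ne: "Dset \<noteq> {}" using F_D by blast
  have w: "w \<in> Dset" "\<And>x. x \<in> Dset \<Longrightarrow> x \<le> w" using Max_in[OF D_fin ne] Max_ge[OF D_fin] w_def by auto
  have c2: "card (Dset - {w}) \<ge> 2" using c3 w(1) D_fin by (simp add: card_Diff_singleton)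
  have ne2: "Dset - {w} \<noteq> {}"
  proof
    assume A: "Dset - {w} = {}"
    have "card (Dset - {w}) = 0" by (simp only: A card.empty)
    then show False using c2 by simp
  qed
  have fin2: "finite (Dset - {w})" using D_fin by simp
  have v: "v \<in> Dset - {w}" "\<And>x. x \<in> Dset - {w} \<Longrightarrow> x \<le> v" using Max_in[OF fin2 ne2] Max_ge[OF fin2] v_def by auto
  have "Dset - {w, v} = (Dset - {w}) - {v}" by auto
  then have c1: "card (Dset - {w, v}) \<ge> 1" using c2 v(1) fin2 by (simp add: card_Diff_singleton)
  have ne3: "Dset - {w, v} \<noteq> {}"
  proof
    assume A: "Dset - {w, v} = {}"
    have "card (Dset - {w, v}) = 0" by (simp only: A card.empty)
    then show False using c1 by simp
  qed
  have fin3: "finite (Dset - {w, v})" using D_fin by simp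
  have u: "u \<in> Dset - {w, v}" using Max_in[OF fin3 ne3] u_def by auto
  define L where "L = (\<lambda>i::nat. if i = 0 then K else if i = 1 then mon (E \<union> {w})
     else if i = 2 then mon (E \<union> {v, w}) else RK)"
  have SH: "h + x \<in> S" if "h \<in> H" "x \<in> S" for h x using that H_sub_S S_add by blast
  have sub1: "is_submod R (mon (E \<union> {w}) :: 'a fps set)" unfolding R_mon
  proof (rule submod_mon)
    fix h x assume hx: "h \<in> H" "x \<in> E \<union> {w}"
    show "h + x \<in> E \<union> {w}"
    proof (cases "x \<in> E")
      case True then show ?thesis using E_add[OF True hx(1)] by (simp add: add.commute)
    next
      case False
      then have xw: "x = w" using hx by auto
      have "h + w \<in> S" using SH hx(1) w(1) by (simp add: Dset_def)
      moreover have "h + w \<notin> Dset \<or> h + w = w" using w(2)[of "h + w"] by auto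
      ultimately show ?thesis using xw by (auto simp: Dset_def)
    qed
  qed
  have sub2: "is_submod R (mon (E \<union> {v, w}) :: 'a fps set)" unfolding R_mon
  proof (rule submod_mon)
    fix h x assume hx: "h \<in> H" "x \<in> E \<union> {v, w}"
    show "h + x \<in> E \<union> {v, w}"
    proof (cases "x \<in> E")
      case True then show ?thesis using E_add[OF True hx(1)] by (simp add: add.commute)
    next
      case False
      then have xvw: "x = v \<or> x = w" using hx by auto
      have xS: "x \<in> S" using xvw v(1) w(1) by (auto simp: Dset_def)
      have hxS: "h + x \<in> S" using SH hx(1) xS by blast
      show ?thesis
      proof (cases "h + x \<in> E")
        case True then show ?thesis by simp
      next
        case False
        then have hD: "h + x \<in> Dset" using hxS by (simp add: Dset_def)
        then have "h + x \<le> w" using w(2) by blast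
        moreover have "h + x = w \<or> h + x \<le> v" using v(2) hD by blast
        ultimately show ?thesis using xvw by auto
      qed
    qed
  qed
  have subK: "is_submod R K" unfolding R_mon K_mon
    by (rule submod_mon) (metis E_add add.commute)
  have subRK: "is_submod R RK" unfolding R_mon RK_mon
    by (rule submod_mon) (rule SH)
  have "length_ge R K RK 3" unfolding length_ge_def
  proof (intro exI[of _ L] conjI allI impI)
    show "L 0 = K" by (simp add: L_def)
    show "L 3 = RK" by (simp add: L_def)
    fix i
    show "i \<le> 3 \<Longrightarrow> is_submod R (L i)" using sub1 sub2 subK subRK by (simp add: L_def)
    assume "i < 3"
    then have "i = 0 \<or> i = 1 \<or> i = 2" by auto
    moreover have "K \<subset> mon (E \<union> {w})" unfolding K_mon
      by (rule mon_strict) (use w(1) in \<open>auto simp: Dset_def\<close>)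
    moreover have "mon (E \<union> {w}) \<subset> (mon (E \<union> {v, w}) :: 'a fps set)"
      by (rule mon_strict[of _ _ v]) (use v(1) w(1) in \<open>auto simp: Dset_def\<close>)
    moreover have "mon (E \<union> {v, w}) \<subset> RK" unfolding RK_mon
      by (rule mon_strict[of _ _ u]) (use v(1) w(1) u E_sub_S in \<open>auto simp: Dset_def\<close>)
    ultimately show "L i \<subset> L (Suc i)" by (auto simp: L_def)
  qed
  then show False using twoAGL by (simp add: module_length_eq_def numeral_3_eq_3)
qed

lemma D_card: "card Dset = 2" using D_ge2 D_le2 by simp

definition dd :: nat where "dd = (THE x. Dset = {F, x})"

lemma D_eq: "Dset = {F, dd}" "dd \<noteq> F"
proof -
  have "card (Dset - {F}) = 1" using D_card F_D D_fin by (simp add: card_Diff_singleton)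
  then obtain x where x: "Dset - {F} = {x}" by (meson card_1_singletonE)
  then have D1: "Dset = {F, x}" "x \<noteq> F" using F_D by auto
  have "(THE x. Dset = {F, x}) = x"
  proof (rule the_equality)
    show "Dset = {F, x}" by (rule D1(1))
    fix y assume "Dset = {F, y}"
    then show "y = x" using D1 by (metis doubleton_eq_iff)
  qed
  then show "Dset = {F, dd}" "dd \<noteq> F" using D1 by (auto simp: dd_def)
qed

definition s :: nat where "s = F - dd"

lemma dd_lt: "dd < F" using D_eq D_le by (metis insertCI le_neq_implies_less)
lemma s_pos: "s > 0" using dd_lt by (simp add: s_def)
lemma dd_S: "dd \<in> S" "dd \<notin> E" using D_eq by (auto simp: Dset_def)
lemma F_S: "F \<in> S" using F_D by (simp add: Dset_def)
lemma s_H: "s \<in> H" using dd_S(2) dd_lt unfolding E2 s_def by simp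
lemma dd_s: "dd + s = F" using dd_lt by (simp add: s_def)

definition Cset :: "nat set" where "Cset = {h. \<forall>\<sigma>\<in>S. h + \<sigma> \<in> H}"

lemma zero_S: "0 \<in> S" using H0 H_sub_S by blast

lemma C_H: assumes "h \<in> Cset" shows "h \<in> H"
proof -
  have "h + 0 \<in> H" using assms zero_S unfolding Cset_def by blast
  then show ?thesis by simp
qed

lemma C_ideal: assumes "h \<in> Cset" "h' \<in> H" shows "h + h' \<in> Cset"
  unfolding Cset_def
proof (intro CollectI ballI)
  fix \<sigma> assume "\<sigma> \<in> S"
  then have "h' + \<sigma> \<in> S" using assms(2) H_sub_S S_add by blast
  then have "h + (h' + \<sigma>) \<in> H" using assms(1) unfolding Cset_def by blast
  then show "h + h' + \<sigma> \<in> H" by (simp add: add.assoc)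
qed

lemma C_dual: assumes "h \<in> H" "h \<le> F" shows "h \<in> Cset \<longleftrightarrow> F - h \<notin> S"
proof
  assume "h \<in> Cset"
  then have "F - h \<in> S \<Longrightarrow> h + (F - h) \<in> H" unfolding Cset_def by blast
  then show "F - h \<notin> S" using N1(1) assms(2) by auto
next
  assume nS: "F - h \<notin> S"
  show "h \<in> Cset" unfolding Cset_def
  proof (intro CollectI ballI)
    fix \<sigma> assume \<sigma>: "\<sigma> \<in> S"
    show "h + \<sigma> \<in> H"
    proof (rule ccontr)
      assume nH: "h + \<sigma> \<notin> H"
      then have le: "h + \<sigma> \<le> F" using N1(2) by (meson not_le)
      have "F - (h + \<sigma>) \<in> E" unfolding E2 using nH le by simp
      then have "F - (h + \<sigma>) + \<sigma> \<in> S" using S_add[OF addcl.base \<sigma>] by blast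
      moreover have "F - (h + \<sigma>) + \<sigma> = F - h" using le by simp
      ultimately show False using nS by simp
    qed
  qed
qed

lemma not_C: "0 \<notin> Cset" "s \<notin> Cset"
proof -
  show "0 \<notin> Cset"
  proof
    assume "0 \<in> Cset"
    then have "0 + F \<in> H" using F_S unfolding Cset_def by blast
    then show False using N1(1) by simp
  qed
  show "s \<notin> Cset"
  proof
    assume "s \<in> Cset"
    then have "s + dd \<in> H" using dd_S(1) unfolding Cset_def by blast
    then show False using N1(1) dd_s by (simp add: add.commute)
  qed
qed

lemma in_C: assumes "h \<in> H" "h \<noteq> 0" "h \<noteq> s" shows "h \<in> Cset"
proof (cases "h \<le> F")
  case False
  then show ?thesis unfolding Cset_def using N1(2) by auto
next
  case True
  show ?thesis
  proof (subst C_dual[OF assms(1) True], rule notI)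
    assume "F - h \<in> S"
    moreover have "F - h \<notin> E" unfolding E2 using True assms(1) by simp
    ultimately have "F - h \<in> Dset" by (simp add: Dset_def)
    then have "F - h = F \<or> F - h = dd" using D_eq by auto
    then show False using assms(2,3) True by (auto simp: s_def)
  qed
qed

lemma s_gen: "\<exists>j\<in>{1..l}. a j = s"
proof -
  obtain j where j: "j \<in> {1..l}" "a j \<le> s" "s - a j \<in> H" using Hdec s_H s_pos by blast
  have "s - a j = 0"
  proof (rule ccontr)
    assume nz: "s - a j \<noteq> 0"
    have "a j \<noteq> 0" using gens_pos j(1) by auto
    moreover have "a j \<noteq> s" using nz by auto
    ultimately have "a j \<in> Cset" using in_C Hgen[OF j(1)] by blast
    then have "a j + (s - a j) \<in> Cset" using C_ideal j(3) by blast
    then show False using j(2) not_C by simp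
  qed
  then show ?thesis using j by auto
qed

end

unbundle fps_syntax

lemma sum_single: "finite A \<Longrightarrow> x \<in> A \<Longrightarrow> (\<And>i. i \<in> A \<Longrightarrow> i \<noteq> x \<Longrightarrow> t i = 0) \<Longrightarrow> sum t A = t x"
  by (simp add: sum.remove sum.neutral)

lemma sum_two: assumes "finite A" "x \<in> A" "y \<in> A" "x \<noteq> y" "\<And>i. i \<in> A \<Longrightarrow> i \<noteq> x \<Longrightarrow> i \<noteq> y \<Longrightarrow> t i = 0"
  shows "sum t A = t x + t y"
proof -
  have "sum t A = t x + sum t (A - {x})" using assms(1,2) by (simp add: sum.remove)
  also have "sum t (A - {x}) = t y" using assms by (intro sum_single) auto
  finally show ?thesis .
qed

lemma strict_dec_rev:
  fixes \<sigma> :: "nat \<Rightarrow> nat"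
  assumes rng: "\<And>k. 1 \<le> k \<Longrightarrow> k \<le> n \<Longrightarrow> 1 \<le> \<sigma> k \<and> \<sigma> k \<le> n"
    and dec: "\<And>k k'. 1 \<le> k \<Longrightarrow> k < k' \<Longrightarrow> k' \<le> n \<Longrightarrow> \<sigma> k' < \<sigma> k"
    and k: "1 \<le> k" "k \<le> n"
  shows "\<sigma> k = n + 1 - k"
proof -
  have up: "\<sigma> k \<le> n + 1 - k" if "1 \<le> k" "k \<le> n" for k
    using that
  proof (induction k)
    case 0 then show ?case by simp
  next
    case (Suc k)
    show ?case
    proof (cases "k = 0")
      case True then show ?thesis using rng[of 1] Suc.prems by simp
    next
      case False
      then have "\<sigma> k \<le> n + 1 - k" using Suc by simp
      moreover have "\<sigma> (Suc k) < \<sigma> k" using dec[of k "Suc k"] Suc.prems False by simp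
      ultimately show ?thesis by simp
    qed
  qed
  have low: "\<sigma> (n - j) \<ge> j + 1" if "j < n" for j
    using that
  proof (induction j)
    case 0 then show ?case using rng[of n] by simp
  next
    case (Suc j)
    have "\<sigma> (n - j) < \<sigma> (n - Suc j)" using dec[of "n - Suc j" "n - j"] Suc.prems by simp
    then show ?case using Suc by simp
  qed
  have "\<sigma> k \<ge> n + 1 - k" using low[of "n - k"] k by simp
  then show ?thesis using up[OF k] by simp
qed

context ctx begin

lemma RK_X: "\<sigma> \<in> S \<Longrightarrow> fps_X ^ \<sigma> \<in> RK" unfolding RK_mon by (rule mon_X)

lemma cc_coef: assumes "q \<in> cc" shows "q $ 0 = 0" "q $ s = 0"
proof -
  have "q * fps_X ^ F \<in> R" using assms RK_X[OF F_S] unfolding cc_def colon_def by blast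
  then have "(q * fps_X ^ F) $ F = 0" using N1(1) unfolding R_mon mon_def by blast
  then show "q $ 0 = 0" by (simp add: fps_X_power_mult_right_nth)
  have "q * fps_X ^ dd \<in> R" using assms RK_X[OF dd_S(1)] unfolding cc_def colon_def by blast
  then have "(q * fps_X ^ dd) $ F = 0" using N1(1) unfolding R_mon mon_def by blast
  then show "q $ s = 0" using dd_s by (simp add: fps_X_power_mult_right_nth) (metis add_diff_cancel_left')
qed

lemma cc_intro: assumes "p \<in> R" "p $ 0 = 0" "p $ s = 0" shows "p \<in> cc"
proof -
  have pC: "p \<in> mon Cset" unfolding mon_iff
  proof (intro allI impI)
    fix n assume "p $ n \<noteq> 0"
    have "n \<in> H" using \<open>p $ n \<noteq> 0\<close> assms(1) unfolding R_mon mon_def by auto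
    moreover have "n \<noteq> 0" using \<open>p $ n \<noteq> 0\<close> assms(2) by metis
    moreover have "n \<noteq> s" using \<open>p $ n \<noteq> 0\<close> assms(3) by metis
    ultimately show "n \<in> Cset" by (rule in_C)
  qed
  show ?thesis unfolding cc_def colon_def
  proof (intro CollectI ballI)
    fix y assume "y \<in> RK"
    then have "y \<in> mon S" using RK_mon by simp
    then show "p * y \<in> R" unfolding R_mon using pC by (intro mon_mult[OF pC]) (auto simp: Cset_def)
  qed
qed

lemma cc_0: "0 \<in> cc" by (simp add: cc_def colon_def R_closed)
lemma cc_add: "p \<in> cc \<Longrightarrow> q \<in> cc \<Longrightarrow> p + q \<in> cc"
  by (auto simp: cc_def colon_def distrib_right intro: R_closed)
lemma cc_diff: "p \<in> cc \<Longrightarrow> q \<in> cc \<Longrightarrow> p - q \<in> cc"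
  by (auto simp: cc_def colon_def left_diff_distrib intro: R_closed)
lemma cc_mult: "g \<in> R \<Longrightarrow> p \<in> cc \<Longrightarrow> g * p \<in> cc"
  by (auto simp: cc_def colon_def mult.assoc intro: R_closed)

definition Acond :: bool where "Acond = (\<forall>k\<in>{1..r}. k < r \<longrightarrow> e k + s \<notin> H)"

lemma Acond_imp: assumes "Acond"
  shows "\<exists>j\<in>{1..l}. \<forall>i\<in>{1..r-1}. f + int (a j) = c i + c (r - i)"
proof -
  obtain j where j: "j \<in> {1..l}" "a j = s" using s_gen by blast
  have EH: "\<exists>m\<in>{1..r}. m < r \<and> (z = e m \<or> z = e m + s)" if zE: "z \<in> E" and zH: "z \<notin> H" for z
  proof -
    obtain m h where mh: "m \<in> {1..r}" "h \<in> H" "z = e m + h" using zE unfolding E_def by blast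
    have "m \<noteq> r" using mh zH e_r by auto
    moreover have "h = 0 \<or> h = s"
    proof (rule ccontr)
      assume "\<not> (h = 0 \<or> h = s)"
      then have "h \<in> Cset" using in_C mh(2) by blast
      then have "h + e m \<in> H" using e_E[OF mh(1)] E_sub_S unfolding Cset_def by blast
      then show False using zH mh(3) by (simp add: add.commute)
    qed
    ultimately show ?thesis using mh by (intro bexI[of _ m]) auto
  qed
  have partner: "\<exists>m. m \<in> {1..r} \<and> m < r \<and> Cn k + Cn m = F + s" if k: "k \<in> {1..r}" "k < r" for k
  proof -
    obtain m where m: "m \<in> {1..r}" "m < r" "Cn k = e m \<or> Cn k = e m + s"
      using EH[OF E3(3)[OF k] N2(1)[OF k(1)]] by blast
    have "Cn k \<noteq> e m"
    proof
      assume "Cn k = e m"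
      then have "e m + s \<in> H" using N2(2)[OF k(1) s_H] s_pos by simp
      then show False using assms m unfolding Acond_def by blast
    qed
    then have "Cn k = F - Cn m + s" using m e_eq by auto
    then have "Cn k + Cn m = F + s" using Cn_le[OF m(1)] by simp
    then show ?thesis using m by blast
  qed
  define \<sigma> where "\<sigma> = (\<lambda>k. SOME m. m \<in> {1..r} \<and> m < r \<and> Cn k + Cn m = F + s)"
  have \<sigma>: "\<sigma> k \<in> {1..r} \<and> \<sigma> k < r \<and> Cn k + Cn (\<sigma> k) = F + s" if "k \<in> {1..r}" "k < r" for k
    unfolding \<sigma>_def by (rule someI_ex) (rule partner[OF that])
  have rev: "\<sigma> k = (r - 1) + 1 - k" if "1 \<le> k" "k \<le> r - 1" for k
  proof (rule strict_dec_rev[where n = "r - 1"])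
    show "1 \<le> \<sigma> k \<and> \<sigma> k \<le> r - 1" if "1 \<le> k" "k \<le> r - 1" for k
    proof -
      have "k \<in> {1..r}" "k < r" using that by auto
      then show ?thesis using \<sigma>[of k] by auto
    qed
    show "\<sigma> k' < \<sigma> k" if "1 \<le> k" "k < k'" "k' \<le> r - 1" for k k'
    proof -
      have in1: "k \<in> {1..r}" "k' \<in> {1..r}" "k < r" "k' < r" using that by auto
      have "Cn k < Cn k'" using Cn_less_iff in1 that(2) by blast
      then have "Cn (\<sigma> k') < Cn (\<sigma> k)" using \<sigma>[OF in1(1,3)] \<sigma>[OF in1(2,4)] by linarith
      then show ?thesis using Cn_less_iff \<sigma>[OF in1(1,3)] \<sigma>[OF in1(2,4)] by blast
    qed
  qed (use that in auto)
  have "f + int (a j) = c i + c (r - i)" if "i \<in> {1..r-1}" for i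
  proof -
    have i: "i \<in> {1..r}" "i < r" using that r2 by auto
    have "\<sigma> i = r - i" using rev[of i] that r2 by auto
    then have "Cn i + Cn (r - i) = F + s" using \<sigma>[OF i] by simp
    moreover have "r - i \<in> {1..r}" using i by auto
    ultimately show ?thesis using int_Cn i(1) int_F j(2) by (metis of_nat_add)
  qed
  then show ?thesis using j(1) by blast
qed

lemma imp_Acond: assumes "\<exists>j\<in>{1..l}. \<forall>i\<in>{1..r-1}. f + int (a j) = c i + c (r - i)"
  shows Acond
proof -
  obtain j where j: "j \<in> {1..l}" "\<forall>i\<in>{1..r-1}. f + int (a j) = c i + c (r - i)" using assms by blast
  have ej: "e k + a j \<notin> H" if k: "k \<in> {1..r}" "k < r" for k
  proof -
    have k1: "k \<in> {1..r-1}" "r - k \<in> {1..r}" using k by auto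
    have "int (F + a j) = int (Cn k + Cn (r - k))"
      using j(2) k1 int_Cn k(1) int_F by simp
    then have "F + a j = Cn k + Cn (r - k)" by simp
    then have "e k + a j = Cn (r - k)" using e_eq[OF k(1)] Cn_le[OF k(1)] by simp
    then show ?thesis using N2(1)[OF k1(2)] by simp
  qed
  have one: "1 \<in> {1..r}" "1 < r" using r2 by auto
  have "a j \<notin> Cset"
  proof
    assume "a j \<in> Cset"
    then have "a j + e 1 \<in> H" using e_E[OF one(1)] E_sub_S unfolding Cset_def by blast
    then show False using ej[OF one] by (simp add: add.commute)
  qed
  then have ajs: "a j = s" using in_C Hgen[OF j(1)] gens_pos j(1) by (metis less_not_refl2)
  show ?thesis unfolding Acond_def
  proof (intro ballI impI)
    fix k assume "k \<in> {1..r}" "k < r"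
    then show "e k + s \<notin> H" using ej[of k] ajs by simp
  qed
qed

end

unbundle fps_syntax

context ctx begin

lemma EH: assumes zE: "z \<in> E" and zH: "z \<notin> H"
  shows "\<exists>m\<in>{1..r}. m < r \<and> (z = e m \<or> z = e m + s)"
proof -
  obtain m h where mh: "m \<in> {1..r}" "h \<in> H" "z = e m + h" using zE unfolding E_def by blast
  have "m \<noteq> r" using mh zH e_r by auto
  moreover have "h = 0 \<or> h = s"
  proof (rule ccontr)
    assume "\<not> (h = 0 \<or> h = s)"
    then have "h \<in> Cset" using in_C mh(2) by blast
    then have "h + e m \<in> H" using e_E[OF mh(1)] E_sub_S unfolding Cset_def by blast
    then show False using zH mh(3) by (simp add: add.commute)
  qed
  ultimately show ?thesis using mh by (intro bexI[of _ m]) auto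
qed

lemma K_add: "x \<in> K \<Longrightarrow> y \<in> K \<Longrightarrow> x + y \<in> K" unfolding K_mon by (rule mon_add)
lemma K_mult: assumes "g \<in> R" "x \<in> K" shows "g * x \<in> K"
proof -
  have "g \<in> mon H" "x \<in> mon E" using assms R_mon K_mon by auto
  then show ?thesis unfolding K_mon by (rule mon_mult) (metis E_add add.commute)
qed
lemma R_K: "R \<subseteq> K" unfolding K_mon R_mon using mon_mono H_sub_E by blast
lemma X_K: "k \<in> {1..r} \<Longrightarrow> fps_X ^ e k \<in> K" unfolding K_mon by (rule mon_X) (rule e_E)

lemma e_inj: assumes "k \<in> {1..r}" "m \<in> {1..r}" "e k = e m" shows "k = m"
proof -
  have "F - Cn k = F - Cn m" using assms e_eq by simp
  then have "Cn k = Cn m" using Cn_le[OF assms(1)] Cn_le[OF assms(2)] by linarith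
  then show ?thesis using Cn_inj assms by blast
qed

lemma e_shift: assumes "k \<in> {1..r}" "m \<in> {1..r}" shows "e k \<noteq> e m + s"
proof
  assume "e k = e m + s"
  then have "F - Cn k = F - Cn m + s" using e_eq assms by simp
  then have "Cn m = Cn k + s" using Cn_le[OF assms(1)] Cn_le[OF assms(2)] by linarith
  moreover have "Cn k + s \<in> H" using N2(2)[OF assms(1) s_H] s_pos by simp
  ultimately show False using N2(1)[OF assms(2)] by simp
qed

lemma coefA: assumes "g \<in> R" "x \<in> K" "k \<in> {1..r}"
  shows "(g * x) $ (e k) = g $ 0 * x $ (e k)"
proof -
  have "(g * x) $ (e k) = (\<Sum>i=0..e k. g$i * x$(e k - i))" by (rule fps_mult_nth)
  also have "\<dots> = g$0 * x$(e k - 0)"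
  proof (rule sum_single)
    fix i assume i: "i \<in> {0..e k}" "i \<noteq> 0"
    show "g$i * x$(e k - i) = 0"
    proof (cases "g $ i = 0")
      case False
      then have "i \<in> H" using assms(1) unfolding R_mon mon_def by blast
      then have "e k - i \<notin> E" using E4[OF assms(3)] i by auto
      then have "x $ (e k - i) = 0" using assms(2) unfolding K_mon mon_def by blast
      then show ?thesis by simp
    qed simp
  qed auto
  finally show ?thesis by simp
qed

lemma coefB: assumes A: Acond and "g \<in> R" "x \<in> K" "k \<in> {1..r}" "k < r"
  shows "(g * x) $ (e k + s) = g $ 0 * x $ (e k + s) + g $ s * x $ (e k)"
proof -
  have "(g * x) $ (e k + s) = (\<Sum>i=0..e k + s. g$i * x$(e k + s - i))" by (rule fps_mult_nth)
  also have "\<dots> = g$0 * x$(e k + s - 0) + g$s * x$(e k + s - s)"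
  proof (rule sum_two)
    fix i assume i: "i \<in> {0..e k + s}" "i \<noteq> 0" "i \<noteq> s"
    show "g$i * x$(e k + s - i) = 0"
    proof (cases "g $ i = 0")
      case False
      then have "i \<in> H" using assms(2) unfolding R_mon mon_def by blast
      then have iC: "i \<in> Cset" using in_C i by blast
      have "x $ (e k + s - i) = 0"
      proof (rule ccontr)
        assume "x $ (e k + s - i) \<noteq> 0"
        then have "e k + s - i \<in> E" using assms(3) unfolding K_mon mon_def by blast
        then have "i + (e k + s - i) \<in> H" using iC E_sub_S unfolding Cset_def by blast
        then have "e k + s \<in> H" using i(1) by simp
        then show False using A assms(4,5) unfolding Acond_def by blast
      qed
      then show ?thesis by simp
    qed simp
  qed (use s_pos in auto)
  finally show ?thesis by simp
qed

lemma qi_imp_A: assumes "quot_iso_free R K R cc (r - 1)" shows Acond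
proof (rule ccontr)
  assume "\<not> Acond"
  then obtain k where k: "k \<in> {1..r}" "k < r" "e k + s \<in> H" unfolding Acond_def by blast
  obtain \<phi> where \<phi>R: "\<forall>x\<in>K. \<forall>i<r - 1. \<phi> x i \<in> R"
    and \<phi>add: "\<forall>x\<in>K. \<forall>y\<in>K. \<forall>i<r - 1. \<phi> (x + y) i - \<phi> x i - \<phi> y i \<in> cc"
    and \<phi>lin: "\<forall>g\<in>R. \<forall>x\<in>K. \<forall>i<r - 1. \<phi> (g * x) i - g * \<phi> x i \<in> cc"
    and \<phi>ker: "\<forall>x\<in>K. (\<forall>i<r - 1. \<phi> x i \<in> cc) \<longleftrightarrow> x \<in> R"
    and \<phi>surj: "\<forall>y. (\<forall>i<r - 1. y i \<in> R) \<longrightarrow> (\<exists>x\<in>K. \<forall>i<r - 1. \<phi> x i - y i \<in> cc)"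
    using assms unfolding quot_iso_free_def by blast
  define x :: "'a fps" where "x = fps_X ^ e k"
  have xK: "x \<in> K" using X_K[OF k(1)] by (simp add: x_def)
  have XsR: "fps_X ^ s \<in> R" using R_X s_H by blast
  have xsR: "fps_X ^ s * x \<in> R" unfolding x_def power_add[symmetric] using R_X k(3) by (simp add: add.commute)
  have xsK: "fps_X ^ s * x \<in> K" using xsR R_K by blast
  define lam where "lam = (\<lambda>i. \<phi> x i $ s)"
  have approx: "\<phi> x i - fps_const (lam i) * fps_X ^ s \<in> cc" if i: "i < r - 1" for i
  proof -
    have b1: "\<phi> (fps_X ^ s * x) i \<in> cc" using \<phi>ker xsK xsR i by blast
    have b2: "\<phi> (fps_X ^ s * x) i - fps_X ^ s * \<phi> x i \<in> cc" using \<phi>lin XsR xK i by blast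
    have "\<phi> (fps_X ^ s * x) i - (\<phi> (fps_X ^ s * x) i - fps_X ^ s * \<phi> x i) \<in> cc" by (rule cc_diff[OF b1 b2])
    then have "fps_X ^ s * \<phi> x i \<in> cc" by simp
    then have "(fps_X ^ s * \<phi> x i) $ s = 0" by (rule cc_coef)
    then have z0: "\<phi> x i $ 0 = 0" by (simp add: fps_X_power_mult_nth)
    show ?thesis
      by (rule cc_intro) (use z0 s_pos \<phi>R xK i XsR in \<open>auto simp: lam_def intro!: R_closed\<close>)
  qed
  obtain z where zK: "z \<in> K" and z: "\<forall>i<r - 1. \<phi> z i - fps_const (lam i) \<in> cc"
    using \<phi>surj[rule_format, of "\<lambda>i. fps_const (lam i)"] R_closed(5) by blast
  define w where "w = fps_X ^ s * z"
  have wK: "w \<in> K" using K_mult XsR zK by (simp add: w_def)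
  have m1R: "(- 1 :: 'a fps) \<in> R" using R_closed(3)[OF R_closed(5)[of 1]] by simp
  have w'K: "(- 1) * w \<in> K" using K_mult[OF m1R wK] .
  have "\<phi> (x + (- 1) * w) i \<in> cc" if i: "i < r - 1" for i
  proof -
    have a1: "\<phi> w i - fps_X ^ s * \<phi> z i \<in> cc" using \<phi>lin XsR zK i by (simp add: w_def)
    have a2: "fps_X ^ s * (\<phi> z i - fps_const (lam i)) \<in> cc" using cc_mult XsR z i by blast
    have a3: "\<phi> x i - fps_const (lam i) * fps_X ^ s \<in> cc" using approx i by blast
    have a4: "\<phi> (x + (- 1) * w) i - \<phi> x i - \<phi> ((- 1) * w) i \<in> cc" using \<phi>add xK w'K i by blast
    have a5: "\<phi> ((- 1) * w) i - (- 1) * \<phi> w i \<in> cc" using \<phi>lin m1R wK i by blast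
    have eq: "\<phi> (x + (- 1) * w) i = (\<phi> (x + (- 1) * w) i - \<phi> x i - \<phi> ((- 1) * w) i)
       + (\<phi> ((- 1) * w) i - (- 1) * \<phi> w i) + ((\<phi> x i - fps_const (lam i) * fps_X ^ s)
       - ((\<phi> w i - fps_X ^ s * \<phi> z i) + fps_X ^ s * (\<phi> z i - fps_const (lam i))))"
      by (simp add: algebra_simps)
    have big: "(\<phi> (x + (- 1) * w) i - \<phi> x i - \<phi> ((- 1) * w) i)
       + (\<phi> ((- 1) * w) i - (- 1) * \<phi> w i) + ((\<phi> x i - fps_const (lam i) * fps_X ^ s)
       - ((\<phi> w i - fps_X ^ s * \<phi> z i) + fps_X ^ s * (\<phi> z i - fps_const (lam i)))) \<in> cc"
      by (intro cc_add cc_diff a1 a2 a3 a4 a5)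
    from big show ?thesis by (simp only: eq[symmetric])
  qed
  moreover have "x + (- 1) * w \<in> K" using K_add xK w'K by blast
  ultimately have inR: "x + (- 1) * w \<in> R" using \<phi>ker by blast
  have "(x + (- 1) * w) $ e k = 1"
  proof -
    have "w $ e k = 0"
    proof (cases "e k < s")
      case False
      then have "e k - s \<notin> E" using E4[OF k(1) s_H] s_pos by simp
      then have "z $ (e k - s) = 0" using zK unfolding K_mon mon_def by blast
      then show ?thesis using False by (simp add: w_def fps_X_power_mult_nth)
    qed (simp add: w_def fps_X_power_mult_nth)
    then show ?thesis by (simp add: x_def)
  qed
  moreover have "e k \<notin> H" using E3(1)[OF k(1,2)] .
  ultimately show False using inR unfolding R_mon mon_def by force
qed

definition phi :: "'a fps \<Rightarrow> nat \<Rightarrow> 'a fps" where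
  "phi x i = fps_const (x $ e (Suc i)) + fps_const (x $ (e (Suc i) + s)) * fps_X ^ s"

lemma phi_0: "phi x i $ 0 = x $ e (Suc i)" using s_pos by (simp add: phi_def fps_X_power_mult_right_nth)
lemma phi_s: "phi x i $ s = x $ (e (Suc i) + s)" using s_pos by (simp add: phi_def fps_X_power_mult_right_nth)
lemma phi_R: "phi x i \<in> R" unfolding phi_def
  by (rule R_closed(2)[OF R_closed(5) R_closed(1)[OF R_closed(5) R_X[OF s_H]]])

lemma A_imp_qi: assumes A: Acond shows "quot_iso_free R K R cc (r - 1)"
  unfolding quot_iso_free_def
proof (intro exI[of _ phi] conjI ballI allI impI)
  fix x i assume "i < r - 1"
  show "phi x i \<in> R" by (rule phi_R)
next
  fix x y i assume "i < r - 1"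
  have "phi (x + y) i - phi x i - phi y i = 0"
    by (simp add: phi_def algebra_simps fps_const_add[symmetric] del: fps_const_add)
  then show "phi (x + y) i - phi x i - phi y i \<in> cc" using cc_0 by simp
next
  fix g x i assume g: "g \<in> R" and x: "x \<in> K" and i: "i < r - 1"
  have k: "Suc i \<in> {1..r}" "Suc i < r" using i by auto
  let ?\<Delta> = "phi (g * x) i - g * phi x i"
  have gphi: "g * phi x i = g * fps_const (x $ e (Suc i)) + (g * fps_const (x $ (e (Suc i) + s))) * fps_X ^ s"
    by (simp add: phi_def algebra_simps)
  show "?\<Delta> \<in> cc"
  proof (rule cc_intro)
    show "?\<Delta> \<in> R" using phi_R g by (intro R_closed)
    show "?\<Delta> $ 0 = 0" using coefA[OF g x k(1)] by (simp add: phi_0 phi_def)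
    show "?\<Delta> $ s = 0"
      unfolding fps_sub_nth phi_s coefB[OF A g x k] gphi fps_add_nth
      using s_pos by (simp add: fps_X_power_mult_right_nth)
  qed
next
  fix x assume x: "x \<in> K"
  show "(\<forall>i<r - 1. phi x i \<in> cc) \<longleftrightarrow> x \<in> R"
  proof
    assume all: "\<forall>i<r - 1. phi x i \<in> cc"
    have z: "x $ e m = 0 \<and> x $ (e m + s) = 0" if "m \<in> {1..r}" "m < r" for m
    proof -
      have "m - 1 < r - 1" "Suc (m - 1) = m" using that by auto
      then have "phi x (m - 1) \<in> cc" using all by blast
      then show ?thesis using cc_coef[of "phi x (m - 1)"] phi_0 phi_s \<open>Suc (m - 1) = m\<close> by metis
    qed
    show "x \<in> R" unfolding R_mon mon_iff
    proof (intro allI impI)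
      fix n assume n: "x $ n \<noteq> 0"
      then have "n \<in> E" using x unfolding K_mon mon_def by blast
      show "n \<in> H"
      proof (rule ccontr)
        assume "n \<notin> H"
        then obtain m where "m \<in> {1..r}" "m < r" "n = e m \<or> n = e m + s" using EH \<open>n \<in> E\<close> by blast
        then show False using z n by blast
      qed
    qed
  next
    assume xR: "x \<in> R"
    show "\<forall>i<r - 1. phi x i \<in> cc"
    proof (intro allI impI)
      fix i assume i: "i < r - 1"
      have k: "Suc i \<in> {1..r}" "Suc i < r" using i by auto
      have "e (Suc i) \<notin> H" "e (Suc i) + s \<notin> H" using E3(1)[OF k] A k unfolding Acond_def by auto
      then have "x $ e (Suc i) = 0" "x $ (e (Suc i) + s) = 0" using xR unfolding R_mon mon_def by auto
      then have "phi x i = 0" by (simp add: phi_def)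
      then show "phi x i \<in> cc" using cc_0 by simp
    qed
  qed
next
  fix y :: "nat \<Rightarrow> 'a fps" assume y: "\<forall>i<r - 1. y i \<in> R"
  define g where "g = (\<lambda>k. if k < r then fps_const (y (k - 1) $ 0) + fps_const (y (k - 1) $ s) * fps_X ^ s else 0)"
  define x where "x = (\<Sum>k\<in>{1..r}. g k * fps_X ^ e k)"
  have gR: "g k \<in> R" for k unfolding g_def
    using R_closed(2)[OF R_closed(5) R_closed(1)[OF R_closed(5) R_X[OF s_H]]] R_closed(6) by auto
  have xK: "x \<in> K" unfolding K_def monomial_module_def x_def e_def using gR by blast
  have gnth: "g k $ j = (if k < r then (if j = 0 then y (k - 1) $ 0 else 0) + (if j = s then y (k - 1) $ s else 0) else 0)" for k j
    using s_pos by (simp add: g_def fps_X_power_mult_right_nth)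
  have xnth: "x $ n = (\<Sum>k\<in>{1..r}. if n < e k then 0 else g k $ (n - e k))" for n
    by (simp add: x_def fps_sum_nth fps_X_power_mult_right_nth)
  have x0: "x $ e m = y (m - 1) $ 0" if m: "m \<in> {1..r}" "m < r" for m
  proof -
    have "x $ e m = (if e m < e m then 0 else g m $ (e m - e m))" unfolding xnth
    proof (rule sum_single)
      fix k assume k: "k \<in> {1..r}" "k \<noteq> m"
      have "e k \<noteq> e m" using e_inj k m by blast
      moreover have "e m \<noteq> e k + s" using e_shift m(1) k(1) by blast
      ultimately show "(if e m < e k then 0 else g k $ (e m - e k)) = 0"
        unfolding gnth using s_pos by auto
    qed (use m in auto)
    then show ?thesis using m s_pos by (simp add: gnth)
  qed
  have xs: "x $ (e m + s) = y (m - 1) $ s" if m: "m \<in> {1..r}" "m < r" for m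
  proof -
    have "x $ (e m + s) = (if e m + s < e m then 0 else g m $ (e m + s - e m))" unfolding xnth
    proof (rule sum_single)
      fix k assume k: "k \<in> {1..r}" "k \<noteq> m"
      have "e k \<noteq> e m" using e_inj k m by blast
      moreover have "e k \<noteq> e m + s" using e_shift m(1) k(1) by blast
      ultimately show "(if e m + s < e k then 0 else g k $ (e m + s - e k)) = 0"
        unfolding gnth using s_pos by auto
    qed (use m in auto)
    then show ?thesis using m s_pos by (simp add: gnth)
  qed
  show "\<exists>x\<in>K. \<forall>i<r - 1. phi x i - y i \<in> cc"
  proof (intro bexI[OF _ xK] allI impI)
    fix i assume i: "i < r - 1"
    have k: "Suc i \<in> {1..r}" "Suc i < r" using i by auto
    show "phi x i - y i \<in> cc"
    proof (rule cc_intro)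
      show "phi x i - y i \<in> R" using phi_R y i by (intro R_closed) auto
      show "(phi x i - y i) $ 0 = 0" using x0[OF k] by (simp add: phi_0)
      show "(phi x i - y i) $ s = 0" using xs[OF k] by (simp add: phi_s)
    qed
  qed
qed

lemma main: "quot_iso_free R K R cc (r - 1) \<longleftrightarrow>
         (\<exists>j\<in>{1..l}. \<forall>i\<in>{1..r-1}. f + int (a j) = c i + c (r - i))"
  using qi_imp_A A_imp_qi Acond_imp imp_Acond by blast

end

theorem corollary2p6:
  fixes a :: "nat \<Rightarrow> nat" and l :: nat and H :: "nat set"
    and R K RK cc :: "'a::field fps set"
    and f :: int and c :: "nat \<Rightarrow> int" and r :: nat
  assumes gens_pos: "\<forall>i\<in>{1..l}. a i > 0"
    and gcd1: "Gcd (a ` {1..l}) = 1"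
    and H_def: "H = semigroup_gen a l"
    and R_def: "R = semigroup_ring H"
    and f_def: "f = frobenius H"
    and c_mono: "strict_mono_on {1..r} c"
    and c_PF: "c ` {1..r} = pseudo_frobenius H a l"
    and K_def: "K = monomial_module R (\<lambda>i. nat (f - c i)) r"
    and RK_def: "RK = ring_adjoin R K"
    and cc_def: "cc = colon R RK"
    and twoAGL: "module_length_eq R K RK 2"
  shows "quot_iso_free R K R cc (r - 1) \<longleftrightarrow>
         (\<exists>j\<in>{1..l}. \<forall>i\<in>{1..r-1}. f + int (a j) = c i + c (r - i))"
proof -
  have "ctx a l H R K RK cc f c r" unfolding ctx_def using assms by blast
  then show ?thesis by (rule ctx.main)
qed

end
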